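(* Let $E$ be a topological space with (Krull) dimension $\dim E<\infty$. (i) If $\Gamma(x_0,x_n)$ is a presentation for the length of $E$, then $x_0$ is initial in $E$ and $x_n$ is final in $E$. (ii) If $E$ has the $(UIP)$-property, then $l(E)=\dim E$.
   Context: For $x,y$ in a topological space $E$, write $x\rightarrow y$ if $y\in\overline{\{x\}}$, and $x\leftrightarrow y$ if both $x\rightarrow y$ and $y\rightarrow x$. A point $x$ is initial in $E$ if $x\leftrightarrow z$ for every $z\in E$ with $z\rightarrow x$, and final in $E$ if $x\leftrightarrow z$ for every $z\in E$ with $x\rightarrow z$. For $x\rightarrow y$ in $E$, a restrict series of specializations $\Gamma(x,y)$ from $x$ to $y$ is a chain $x=x_0\rightarrow x_1\rightarrow\cdots\rightarrow x_n=y$ in $E$ such that: if $y\rightarrow x$ then $y=x$ (and the chain is trivial); if $y\not\rightarrow x$, then for each $i=0,\dots,n-1$, $x_{i+1}\not\rightarrow x_i$ (i.e. $x_i$ is not a specialization of $x_{i+1}$). Its length is $n$. The length $l(x,y)$ is the supremum of lengths of restrict series from $x$ to $y$, and $l(E)=\sup\{l(x,y): x,y\in E,\ x\rightarrow y\}$. A restrict series in $E$ is a presentation for the length of $E$ if its length equals $l(E)$. $\dim E$ is the supremum of the lengths $n$ of chains $F_0\supsetneq F_1\supsetneq\cdots\supsetneq F_n$ of irreducible closed subsets of $E$. $E$ has the $(UIP)$-property if every irreducible closed subset $U$ of $E$ contains exactly one point $x_U$ initial in $U$ (subspace topology), and $x_U\neq x_V$ for distinct irreducible closed subsets $U\neq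 V$. *)

theory Defs
  imports "HOL-Analysis.Analysis" "HOL-Library.Extended_Nat"
begin

definition spec :: "'a topology \<Rightarrow> 'a \<Rightarrow> 'a \<Rightarrow> bool" where
  "spec X x y \<longleftrightarrow> x \<in> topspace X \<and> y \<in> X closure_of {x}"

definition initial_pt :: "'a topology \<Rightarrow> 'a \<Rightarrow> bool" where
  "initial_pt X x \<longleftrightarrow> x \<in> topspace X \<and>
     (\<forall>z \<in> topspace X. spec X z x \<longrightarrow> (spec X x z \<and> spec X z x))"

definition final_pt :: "'a topology \<Rightarrow> 'a \<Rightarrow> bool" where
  "final_pt X x \<longleftrightarrow> x \<in> topspace X \<and>
     (\<forall>z \<in> topspace X. spec X x z \<longrightarrow> (spec X x z \<and> spec X z x))"

definition restrict_series :: "'a topology \<Rightarrow> 'a list \<Rightarrow> bool" where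
  "restrict_series X xs \<longleftrightarrow> xs \<noteq> [] \<and>
     (\<forall>i < length xs - 1. spec X (xs ! i) (xs ! Suc i)) \<and>
     spec X (hd xs) (last xs) \<and>
     (spec X (last xs) (hd xs) \<longrightarrow> last xs = hd xs \<and> length xs = 1) \<and>
     (\<not> spec X (last xs) (hd xs) \<longrightarrow>
        (\<forall>i < length xs - 1. \<not> spec X (xs ! Suc i) (xs ! i)))"

definition series_len :: "'a list \<Rightarrow> enat" where
  "series_len xs = enat (length xs - 1)"

definition pt_length :: "'a topology \<Rightarrow> 'a \<Rightarrow> 'a \<Rightarrow> enat" where
  "pt_length X x y = Sup {series_len xs | xs. restrict_series X xs \<and> hd xs = x \<and> last xs = y}"

definition space_length :: "'a topology \<Rightarrow> enat" where
  "space_length X = Sup {pt_length X x y | x y. x \<in> topspace X \<and> y \<in> topspace X \<and> spec X x y}"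

definition presentation :: "'a topology \<Rightarrow> 'a list \<Rightarrow> bool" where
  "presentation X xs \<longleftrightarrow> restrict_series X xs \<and> series_len xs = space_length X"

definition irreducible_in :: "'a topology \<Rightarrow> 'a set \<Rightarrow> bool" where
  "irreducible_in X S \<longleftrightarrow> S \<noteq> {} \<and> S \<subseteq> topspace X \<and>
     (\<forall>C1 C2. closedin X C1 \<and> closedin X C2 \<and> S \<subseteq> C1 \<union> C2 \<longrightarrow> S \<subseteq> C1 \<or> S \<subseteq> C2)"

definition irr_closed :: "'a topology \<Rightarrow> 'a set \<Rightarrow> bool" where
  "irr_closed X S \<longleftrightarrow> closedin X S \<and> irreducible_in X S"

definition krull_dim :: "'a topology \<Rightarrow> enat" where
  "krull_dim X = Sup {enat n | n. \<exists>F :: nat \<Rightarrow> 'a set.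
      (\<forall>i \<le> n. irr_closed X (F i)) \<and> (\<forall>i < n. F (Suc i) \<subset> F i)}"

definition UIP :: "'a topology \<Rightarrow> bool" where
  "UIP X \<longleftrightarrow>
     (\<forall>U. irr_closed X U \<longrightarrow> (\<exists>!x. x \<in> U \<and> initial_pt (subtopology X U) x)) \<and>
     (\<forall>U V. irr_closed X U \<and> irr_closed X V \<and> U \<noteq> V \<longrightarrow>
        (THE x. x \<in> U \<and> initial_pt (subtopology X U) x) \<noteq>
        (THE x. x \<in> V \<and> initial_pt (subtopology X V) x))"

end

theory Submission
  imports Defs
begin

lemma spec_iff: "spec X x y \<longleftrightarrow> x \<in> topspace X \<and> y \<in> topspace X \<and> X closure_of {y} \<subseteq> X closure_of {x}"
proof
  assume a: "spec X x y"
  then have y: "y \<in> X closure_of {x}" and x: "x \<in> topspace X" by (auto simp: spec_def)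
  then have "y \<in> topspace X" by (meson closure_of_subset_topspace subsetD)
  moreover have "X closure_of {y} \<subseteq> X closure_of {x}"
    using y by (intro closure_of_minimal) auto
  ultimately show "x \<in> topspace X \<and> y \<in> topspace X \<and> X closure_of {y} \<subseteq> X closure_of {x}" using x by auto
next
  assume h: "x \<in> topspace X \<and> y \<in> topspace X \<and> X closure_of {y} \<subseteq> X closure_of {x}"
  then have "y \<in> X closure_of {y}" using closure_of_subset[of "{y}" X] by blast
  then show "spec X x y" using h unfolding spec_def by blast
qed

lemma spec_trans: "spec X x y \<Longrightarrow> spec X y z \<Longrightarrow> spec X x z"
  unfolding spec_iff by blast

lemma spec_refl: "x \<in> topspace X \<Longrightarrow> spec X x x"
  unfolding spec_iff by blast

lemma spec_top1: "spec X x y \<Longrightarrow> x \<in> topspace X" unfolding spec_iff by blast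
lemma spec_top2: "spec X x y \<Longrightarrow> y \<in> topspace X" unfolding spec_iff by blast

lemma spec_cl: "spec X x y \<longleftrightarrow> x \<in> topspace X \<and> y \<in> X closure_of {x}"
  by (simp add: spec_def)

lemma irr_closed_cl:
  assumes "x \<in> topspace X"
  shows "irr_closed X (X closure_of {x})"
proof -
  have xin: "x \<in> X closure_of {x}" using closure_of_subset[of "{x}" X] assms by blast
  have "irreducible_in X (X closure_of {x})"
    unfolding irreducible_in_def
  proof (intro conjI allI impI)
    show "X closure_of {x} \<noteq> {}" using xin by blast
    show "X closure_of {x} \<subseteq> topspace X" by (rule closure_of_subset_topspace)
    fix C1 C2 assume h: "closedin X C1 \<and> closedin X C2 \<and> X closure_of {x} \<subseteq> C1 \<union> C2"
    then have "x \<in> C1 \<or> x \<in> C2" using xin by blast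
    then show "X closure_of {x} \<subseteq> C1 \<or> X closure_of {x} \<subseteq> C2"
      using h closure_of_minimal[of "{x}" C1 X] closure_of_minimal[of "{x}" C2 X] by blast
  qed
  then show ?thesis by (simp add: irr_closed_def)
qed

lemma spec_sub:
  assumes "closedin X U" "z \<in> U"
  shows "spec (subtopology X U) z y \<longleftrightarrow> spec X z y"
proof -
  have zt: "z \<in> topspace X" using assms closedin_subset by blast
  have "X closure_of {z} \<subseteq> U" using assms by (intro closure_of_minimal) auto
  then have "U \<inter> X closure_of (U \<inter> {z}) = X closure_of {z}" using assms by auto
  then show ?thesis using zt assms
    by (simp add: spec_def closure_of_subtopology)
qed

lemma initial_cl:
  assumes "x \<in> topspace X"
  shows "initial_pt (subtopology X (X closure_of {x})) x"
proof -
  let ?U = "X closure_of {x}"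
  have xin: "x \<in> ?U" using closure_of_subset[of "{x}" X] assms by blast
  have cU: "closedin X ?U" by simp
  show ?thesis unfolding initial_pt_def
  proof (intro conjI ballI impI)
    show "x \<in> topspace (subtopology X ?U)" using xin assms by simp
    fix z assume z: "z \<in> topspace (subtopology X ?U)" and "spec (subtopology X ?U) z x"
    then have zU: "z \<in> ?U" by simp
    have sxz: "spec X x z" using zU assms by (simp add: spec_cl)
    have szx: "spec X z x" using \<open>spec (subtopology X ?U) z x\<close> spec_sub[OF cU zU] by simp
    show "spec (subtopology X ?U) x z" using spec_sub[OF cU xin] sxz by simp
    show "spec (subtopology X ?U) z x" using spec_sub[OF cU zU] szx by simp
  qed
qed

lemma UIP_ex1: "UIP X \<Longrightarrow> irr_closed X U \<Longrightarrow> \<exists>!x. x \<in> U \<and> initial_pt (subtopology X U) x"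
  unfolding UIP_def by (drule conjunct1) (erule allE, erule mp)

lemma UIP_neq: "UIP X \<Longrightarrow> irr_closed X U \<Longrightarrow> irr_closed X V \<Longrightarrow> U \<noteq> V \<Longrightarrow>
   (THE x. x \<in> U \<and> initial_pt (subtopology X U) x) \<noteq> (THE x. x \<in> V \<and> initial_pt (subtopology X V) x)"
  unfolding UIP_def by (drule conjunct2) (erule allE[of _ U], erule allE[of _ V], erule mp, blast)

lemma UIP_T0:
  assumes "UIP X" "spec X x y" "spec X y x"
  shows "x = y"
proof -
  let ?U = "X closure_of {x}"
  have xt: "x \<in> topspace X" by (rule spec_top1[OF assms(2)])
  have cU: "closedin X ?U" by simp
  have irr: "irr_closed X ?U" using irr_closed_cl[OF xt] .
  have xin: "x \<in> ?U" using closure_of_subset[of "{x}" X] xt by blast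
  have yin: "y \<in> ?U" using assms(2) by (simp add: spec_cl)
  have ix: "initial_pt (subtopology X ?U) x" using initial_cl[OF xt] .
  have iy: "initial_pt (subtopology X ?U) y"
    unfolding initial_pt_def
  proof (intro conjI ballI impI)
    show "y \<in> topspace (subtopology X ?U)" using yin spec_top1[OF assms(3)] by simp
    fix z assume z: "z \<in> topspace (subtopology X ?U)" and "spec (subtopology X ?U) z y"
    then have zU: "z \<in> ?U" by simp
    have "spec X x z" using zU xt by (simp add: spec_cl)
    then have syz: "spec X y z" by (rule spec_trans[OF assms(3)])
    have szy: "spec X z y" using \<open>spec (subtopology X ?U) z y\<close> spec_sub[OF cU zU] by simp
    show "spec (subtopology X ?U) y z" using spec_sub[OF cU yin] syz by simp
    show "spec (subtopology X ?U) z y" using spec_sub[OF cU zU] szy by simp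
  qed
  have e: "\<exists>!x. x \<in> ?U \<and> initial_pt (subtopology X ?U) x" by (rule UIP_ex1[OF assms(1) irr])
  have "x = (THE x. x \<in> ?U \<and> initial_pt (subtopology X ?U) x)"
    by (rule the1_equality[OF e, symmetric]) (use ix xin in blast)
  moreover have "y = (THE x. x \<in> ?U \<and> initial_pt (subtopology X ?U) x)"
    by (rule the1_equality[OF e, symmetric]) (use iy yin in blast)
  ultimately show ?thesis by simp
qed

lemma UIP_generic:
  assumes "UIP X" "irr_closed X U"
  shows "\<exists>x\<in>U. X closure_of {x} = U"
proof -
  have ex: "\<exists>!x. x \<in> U \<and> initial_pt (subtopology X U) x" by (rule UIP_ex1[OF assms])
  define x where "x = (THE x. x \<in> U \<and> initial_pt (subtopology X U) x)"
  have xU: "x \<in> U" and ix: "initial_pt (subtopology X U) x"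
  proof -
    have "x \<in> U \<and> initial_pt (subtopology X U) x" unfolding x_def by (rule theI'[OF ex])
    then show "x \<in> U" "initial_pt (subtopology X U) x" by auto
  qed
  have xt: "x \<in> topspace X" using xU assms(2) closedin_subset unfolding irr_closed_def by blast
  let ?V = "X closure_of {x}"
  have irrV: "irr_closed X ?V" using irr_closed_cl[OF xt] .
  have xV: "x \<in> ?V" using closure_of_subset[of "{x}" X] xt by blast
  have exV: "\<exists>!y. y \<in> ?V \<and> initial_pt (subtopology X ?V) y" by (rule UIP_ex1[OF assms(1) irrV])
  have "(THE y. y \<in> ?V \<and> initial_pt (subtopology X ?V) y) = x"
    by (rule the1_equality[OF exV]) (use xV initial_cl[OF xt] in blast)
  note eqV = this
  have "?V = U"
  proof (rule ccontr)
    assume ne: "?V \<noteq> U"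
    have "(THE x. x \<in> U \<and> initial_pt (subtopology X U) x) \<noteq>
        (THE y. y \<in> ?V \<and> initial_pt (subtopology X ?V) y)" by (rule UIP_neq[OF assms(1) assms(2) irrV ne[symmetric]])
    then show False using eqV by (simp add: x_def[symmetric])
  qed
  then show ?thesis using xU by blast
qed

lemma series_le_space:
  assumes "restrict_series X xs"
  shows "series_len xs \<le> space_length X"
proof -
  have sp: "spec X (hd xs) (last xs)" using assms by (simp add: restrict_series_def)
  have "series_len xs \<le> pt_length X (hd xs) (last xs)"
    unfolding pt_length_def by (rule Sup_upper) (use assms in blast)
  also have "\<dots> \<le> space_length X"
    unfolding space_length_def by (rule Sup_upper) (use sp spec_top1[OF sp] spec_top2[OF sp] in blast)
  finally show ?thesis .
qed

lemma restrict_trivial: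
  assumes "restrict_series X xs" "length xs \<noteq> 1"
  shows "\<not> spec X (last xs) (hd xs)" "\<And>i. i < length xs - 1 \<Longrightarrow> \<not> spec X (xs ! Suc i) (xs ! i)"
  using assms unfolding restrict_series_def by auto

lemma prepend:
  assumes rs: "restrict_series X xs" and z: "spec X z (hd xs)" and nz: "\<not> spec X (hd xs) z"
  shows "restrict_series X (z # xs)"
proof -
  have ne: "xs \<noteq> []" using rs by (simp add: restrict_series_def)
  have steps: "\<forall>i < length xs - 1. spec X (xs ! i) (xs ! Suc i)" using rs by (simp add: restrict_series_def)
  have hl: "spec X (hd xs) (last xs)" using rs by (simp add: restrict_series_def)
  have nlast: "\<not> spec X (last xs) z"
  proof
    assume a: "spec X (last xs) z"
    show False
    proof (cases "length xs = 1")
      case True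
      then have "last xs = hd xs" using ne by (cases xs) auto
      then show False using a nz by simp
    next
      case False
      then show False using restrict_trivial(1)[OF rs False] spec_trans[OF a z] by blast
    qed
  qed
  have h0: "xs ! 0 = hd xs" using ne by (simp add: hd_conv_nth)
  have c2: "\<forall>i < length (z # xs) - 1. spec X ((z # xs) ! i) ((z # xs) ! Suc i)"
  proof (intro allI impI)
    fix i assume i: "i < length (z # xs) - 1"
    show "spec X ((z # xs) ! i) ((z # xs) ! Suc i)"
    proof (cases i)
      case 0 then show ?thesis using z h0 by simp
    next
      case (Suc j) then show ?thesis using steps i by simp
    qed
  qed
  have c3: "spec X (hd (z # xs)) (last (z # xs))" using spec_trans[OF z hl] ne by simp
  have c4: "\<not> spec X (last (z # xs)) (hd (z # xs))" using nlast ne by simp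
  have c5: "\<forall>i < length (z # xs) - 1. \<not> spec X ((z # xs) ! Suc i) ((z # xs) ! i)"
  proof (intro allI impI)
    fix i assume i: "i < length (z # xs) - 1"
    show "\<not> spec X ((z # xs) ! Suc i) ((z # xs) ! i)"
    proof (cases i)
      case 0 then show ?thesis using nz h0 by simp
    next
      case (Suc j)
      then have "length xs \<noteq> 1" using i by simp
      then show ?thesis using restrict_trivial(2)[OF rs] Suc i by simp
    qed
  qed
  show ?thesis unfolding restrict_series_def using c2 c3 c4 c5 by blast
qed

lemma append_pt:
  assumes rs: "restrict_series X xs" and z: "spec X (last xs) z" and nz: "\<not> spec X z (last xs)"
  shows "restrict_series X (xs @ [z])"
proof -
  have ne: "xs \<noteq> []" using rs by (simp add: restrict_series_def)
  have steps: "\<forall>i < length xs - 1. spec X (xs ! i) (xs ! Suc i)" using rs by (simp add: restrict_series_def)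
  have hl: "spec X (hd xs) (last xs)" using rs by (simp add: restrict_series_def)
  have nhd: "\<not> spec X z (hd xs)"
    using hl nz spec_trans[OF _ hl] by blast
  have hl': "xs ! (length xs - 1) = last xs" using ne by (simp add: last_conv_nth)
  have c2: "\<forall>i < length (xs @ [z]) - 1. spec X ((xs @ [z]) ! i) ((xs @ [z]) ! Suc i)"
  proof (intro allI impI)
    fix i assume i: "i < length (xs @ [z]) - 1"
    show "spec X ((xs @ [z]) ! i) ((xs @ [z]) ! Suc i)"
    proof (cases "Suc i < length xs")
      case True then show ?thesis using steps by (simp add: nth_append)
    next
      case False
      then have "i = length xs - 1" using i by simp
      then show ?thesis using z hl' ne by (simp add: nth_append)
    qed
  qed
  have c3: "spec X (hd (xs @ [z])) (last (xs @ [z]))" using spec_trans[OF hl z] ne by simp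
  have c4: "\<not> spec X (last (xs @ [z])) (hd (xs @ [z]))" using nhd ne by simp
  have c5: "\<forall>i < length (xs @ [z]) - 1. \<not> spec X ((xs @ [z]) ! Suc i) ((xs @ [z]) ! i)"
  proof (intro allI impI)
    fix i assume i: "i < length (xs @ [z]) - 1"
    show "\<not> spec X ((xs @ [z]) ! Suc i) ((xs @ [z]) ! i)"
    proof (cases "Suc i < length xs")
      case True
      then have "length xs \<noteq> 1" by simp
      then show ?thesis using restrict_trivial(2)[OF rs] True by (simp add: nth_append)
    next
      case False
      then have "i = length xs - 1" using i by simp
      then show ?thesis using nz hl' ne by (simp add: nth_append)
    qed
  qed
  show ?thesis unfolding restrict_series_def using c2 c3 c4 c5 by blast
qed

lemma pres_initial:
  assumes p: "presentation X xs"
  shows "initial_pt X (hd xs)"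
proof -
  have rs: "restrict_series X xs" and eq: "series_len xs = space_length X"
    using p by (auto simp: presentation_def)
  have ne: "xs \<noteq> []" using rs by (simp add: restrict_series_def)
  have ht: "hd xs \<in> topspace X" using rs spec_top1[of X "hd xs" "last xs"] by (simp add: restrict_series_def)
  show ?thesis unfolding initial_pt_def
  proof (intro conjI ballI impI ht)
    fix z assume zt: "z \<in> topspace X" and s: "spec X z (hd xs)"
    show "spec X (hd xs) z"
    proof (rule ccontr)
      assume n: "\<not> spec X (hd xs) z"
      have "series_len (z # xs) \<le> space_length X" using series_le_space[OF prepend[OF rs s n]] .
      then have "enat (length (z # xs) - 1) \<le> enat (length xs - 1)" using eq by (simp add: series_len_def)
      then show False using ne by (cases xs) auto
    qed
    show "spec X z (hd xs)" by fact
  qed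
qed

lemma pres_final:
  assumes p: "presentation X xs"
  shows "final_pt X (last xs)"
proof -
  have rs: "restrict_series X xs" and eq: "series_len xs = space_length X"
    using p by (auto simp: presentation_def)
  have ne: "xs \<noteq> []" using rs by (simp add: restrict_series_def)
  have ht: "last xs \<in> topspace X" using rs spec_top2[of X "hd xs" "last xs"] by (simp add: restrict_series_def)
  show ?thesis unfolding final_pt_def
  proof (intro conjI ballI impI ht)
    fix z assume zt: "z \<in> topspace X" and s: "spec X (last xs) z"
    show "spec X z (last xs)"
    proof (rule ccontr)
      assume n: "\<not> spec X z (last xs)"
      have "series_len (xs @ [z]) \<le> space_length X" using series_le_space[OF append_pt[OF rs s n]] .
      then have "enat (length (xs @ [z]) - 1) \<le> enat (length xs - 1)" using eq by (simp add: series_len_def)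
      then show False using ne by (cases xs) auto
    qed
    show "spec X (last xs) z" by fact
  qed
qed


lemma len_le_krull:
  assumes rs: "restrict_series X xs"
  shows "series_len xs \<le> krull_dim X"
proof (cases "length xs = 1")
  case True then show ?thesis by (simp add: series_len_def zero_enat_def[symmetric])
next
  case False
  define n where "n = length xs - 1"
  define F where "F i = X closure_of {xs ! i}" for i
  have ne: "xs \<noteq> []" using rs by (simp add: restrict_series_def)
  have steps: "\<forall>i < n. spec X (xs ! i) (xs ! Suc i)" using rs by (simp add: restrict_series_def n_def)
  have hl: "spec X (hd xs) (last xs)" using rs by (simp add: restrict_series_def)
  have lastn: "xs ! n = last xs" using ne by (simp add: last_conv_nth n_def)
  have top: "xs ! i \<in> topspace X" if "i \<le> n" for i
  proof (cases "i < n")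
    case True then have "spec X (xs ! i) (xs ! Suc i)" using steps by blast
    then show ?thesis by (rule spec_top1)
  next
    case False then have "i = n" using that by simp
    then show ?thesis using lastn spec_top2[OF hl] by simp
  qed
  have irr: "\<forall>i \<le> n. irr_closed X (F i)" unfolding F_def using top by (simp add: irr_closed_cl)
  have strict: "\<forall>i < n. F (Suc i) \<subset> F i"
  proof (intro allI impI)
    fix i assume i: "i < n"
    have s: "spec X (xs ! i) (xs ! Suc i)" using steps i by blast
    have sub: "F (Suc i) \<subseteq> F i" using s unfolding F_def spec_iff by blast
    have ns: "\<not> spec X (xs ! Suc i) (xs ! i)" using restrict_trivial(2)[OF rs False] i n_def by blast
    have "F (Suc i) \<noteq> F i"
    proof
      assume eq: "F (Suc i) = F i"
      have "xs ! i \<in> F i" unfolding F_def using closure_of_subset[of "{xs ! i}" X] top[of i] i by simp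
      then have "xs ! i \<in> X closure_of {xs ! Suc i}" using eq unfolding F_def by simp
      then have "spec X (xs ! Suc i) (xs ! i)" using top[of "Suc i"] i unfolding spec_cl by simp
      then show False using ns by simp
    qed
    then show "F (Suc i) \<subset> F i" using sub by blast
  qed
  have "enat n \<in> {enat n | n. \<exists>F :: nat \<Rightarrow> 'a set.
      (\<forall>i \<le> n. irr_closed X (F i)) \<and> (\<forall>i < n. F (Suc i) \<subset> F i)}" using irr strict by blast
  then have "enat n \<le> krull_dim X" unfolding krull_dim_def by (rule Sup_upper)
  then show ?thesis by (simp add: series_len_def n_def)
qed

lemma space_le_krull: "space_length X \<le> krull_dim X"
  unfolding space_length_def
proof (rule Sup_least)
  fix l assume "l \<in> {pt_length X x y | x y. x \<in> topspace X \<and> y \<in> topspace X \<and> spec X x y}"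
  then obtain x y where l: "l = pt_length X x y" by blast
  show "l \<le> krull_dim X" unfolding l pt_length_def
  proof (rule Sup_least)
    fix m assume "m \<in> {series_len xs | xs. restrict_series X xs \<and> hd xs = x \<and> last xs = y}"
    then obtain xs where "m = series_len xs" "restrict_series X xs" by blast
    then show "m \<le> krull_dim X" using len_le_krull by simp
  qed
qed

lemma chain_le_space:
  assumes U: "UIP X" and irr: "\<forall>i \<le> n. irr_closed X (F i)" and strict: "\<forall>i < n. F (Suc i) \<subset> F i"
  shows "enat n \<le> space_length X"
proof (cases "n = 0")
  case True then show ?thesis by (simp add: zero_enat_def[symmetric])
next
  case False
  define g where "g i = (SOME x. x \<in> F i \<and> X closure_of {x} = F i)" for i
  have gen: "g i \<in> F i \<and> X closure_of {g i} = F i" if "i \<le> n" for i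
  proof -
    have "\<exists>x. x \<in> F i \<and> X closure_of {x} = F i" using UIP_generic[OF U] irr that by blast
    then show ?thesis unfolding g_def by (rule someI_ex)
  qed
  have topF: "F i \<subseteq> topspace X" if "i \<le> n" for i
    using irr that closedin_subset[of X "F i"] unfolding irr_closed_def by blast
  have gtop: "g i \<in> topspace X" if "i \<le> n" for i using gen[OF that] topF[OF that] by blast
  have mono: "F j \<subseteq> F i" if "i \<le> j" "j \<le> n" for i j
    using that
  proof (induction j)
    case 0 then show ?case by simp
  next
    case (Suc j)
    show ?case
    proof (cases "i = Suc j")
      case True then show ?thesis by simp
    next
      case False
      then have "F j \<subseteq> F i" using Suc by simp
      moreover have "j < n" using Suc.prems by simp
      then have "F (Suc j) \<subseteq> F j" using strict by blast
      ultimately show ?thesis by blast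
    qed
  qed
  define xs where "xs = map g [0..<Suc n]"
  have len: "length xs = Suc n" by (simp add: xs_def)
  have nth: "xs ! i = g i" if "i \<le> n" for i using that by (simp add: xs_def nth_map_upt del: upt_Suc)
  have hd: "hd xs = g 0" by (simp add: xs_def del: upt_Suc add: upt_conv_Cons)
  have xne: "xs \<noteq> []" using len by auto
  have last: "last xs = g n" using len nth[of n] xne by (simp add: last_conv_nth)
  have step: "spec X (g i) (g (Suc i))" if "i < n" for i
  proof -
    have "g (Suc i) \<in> F i" using gen[of "Suc i"] mono[of i "Suc i"] that by auto
    then show ?thesis using gtop[of i] gen[of i] that unfolding spec_cl by simp
  qed
  have nback: "\<not> spec X (g (Suc i)) (g i)" if "i < n" for i
  proof
    assume "spec X (g (Suc i)) (g i)"
    then have "g i \<in> F (Suc i)" using gen[of "Suc i"] that unfolding spec_cl by simp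
    then have "F i \<subseteq> F (Suc i)" using gen[of i] that closure_of_minimal[of "{g i}" "F (Suc i)" X] irr
      unfolding irr_closed_def by auto
    then show False using strict that by auto
  qed
  have hl: "spec X (g 0) (g n)"
  proof -
    have "g n \<in> F 0" using gen[of n] mono[of 0 n] by auto
    then show ?thesis using gtop[of 0] gen[of 0] unfolding spec_cl by simp
  qed
  have nlh: "\<not> spec X (g n) (g 0)"
  proof
    assume "spec X (g n) (g 0)"
    then have "g 0 \<in> F n" using gen[of n] unfolding spec_cl by simp
    then have "F 0 \<subseteq> F n" using gen[of 0] closure_of_minimal[of "{g 0}" "F n" X] irr
      unfolding irr_closed_def by auto
    moreover have "F n \<subseteq> F 1" using mono[of 1 n] False by simp
    moreover have "F 1 \<subset> F 0" using strict False by auto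
    ultimately show False by blast
  qed
  have c2: "\<forall>i < length xs - 1. spec X (xs ! i) (xs ! Suc i)"
  proof (intro allI impI)
    fix i assume "i < length xs - 1"
    then have i: "i < n" using len by simp
    then show "spec X (xs ! i) (xs ! Suc i)" using nth[of i] nth[of "Suc i"] step[OF i] by simp
  qed
  have c5: "\<forall>i < length xs - 1. \<not> spec X (xs ! Suc i) (xs ! i)"
  proof (intro allI impI)
    fix i assume "i < length xs - 1"
    then have i: "i < n" using len by simp
    then show "\<not> spec X (xs ! Suc i) (xs ! i)" using nth[of i] nth[of "Suc i"] nback[OF i] by simp
  qed
  have c3: "spec X (hd xs) (last xs)" using hl hd last by simp
  have c4: "\<not> spec X (last xs) (hd xs)" using nlh hd last by simp
  have rs: "restrict_series X xs"
    unfolding restrict_series_def using xne c2 c3 c4 c5 by blast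
  have "series_len xs \<le> space_length X" by (rule series_le_space[OF rs])
  then show ?thesis using len by (simp add: series_len_def)
qed

lemma krull_le_space:
  assumes U: "UIP X"
  shows "krull_dim X \<le> space_length X"
  unfolding krull_dim_def
proof (rule Sup_least)
  fix m assume "m \<in> {enat n | n. \<exists>F :: nat \<Rightarrow> 'a set.
      (\<forall>i \<le> n. irr_closed X (F i)) \<and> (\<forall>i < n. F (Suc i) \<subset> F i)}"
  then obtain n F where "m = enat n" "\<forall>i \<le> n. irr_closed X (F i)" "\<forall>i < n. F (Suc i) \<subset> F i" by blast
  then show "m \<le> space_length X" using chain_le_space[OF U] by simp
qed

theorem lemma2p1:
  fixes X :: "'a topology"
  assumes "krull_dim X < \<infinity>"
  shows "(\<forall>xs. presentation X xs \<longrightarrow> initial_pt X (hd xs) \<and> final_pt X (last xs))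
         \<and> (UIP X \<longrightarrow> space_length X = krull_dim X)"
  using pres_initial pres_final antisym[OF space_le_krull krull_le_space] by blast

end
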